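(* Let $T$ be a tree with $n\ge 2$ vertices, let $v$ be a vertex of $T$, and let $\ell$ be the length (number of edges) of the longest descending path in the rooted tree $T_v$. Then $$F(T)\leq \left[\sum_{k=0}^{\ell-1}\binom{n-2}{k}\right] F(T_v).$$ In particular, $F(T)\leq 2^{n-2}F(T_v)$.
   Context: For a finite undirected graph $G=(V,E)$, a shelling of $G$ is a total ordering $\sigma(1),\ldots,\sigma(|E|)$ of $E$ such that for every $k$ the edges $\sigma(1),\ldots,\sigma(k)$ form a connected subgraph; $F(G)$ is the number of shellings of $G$. For a vertex $v$ of a tree $T$, $T_v$ denotes $T$ rooted at $v$; a shelling of $T_v$ is a shelling $\sigma$ of $T$ whose first edge $\sigma(1)$ is incident to $v$, and $F(T_v)$ is the number of such shellings. In $T_v$, $u$ is the parent of $w$ (and $w$ a child of $u$) if $(u,w)$ is an edge and $u$ is closer to $v$ than $w$; a descending path from $u$ to $w$ is a path $u - v_1 - \cdots - v_r - w$ in which each vertex is the parent of the next. *)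

theory Defs
  imports Main
begin

definition simple_graph :: "'a set \<Rightarrow> 'a set set \<Rightarrow> bool" where
  "simple_graph V E \<longleftrightarrow> finite V \<and>
     (\<forall>e\<in>E. \<exists>u w. u \<noteq> w \<and> e = {u, w} \<and> u \<in> V \<and> w \<in> V)"

definition is_path :: "'a set set \<Rightarrow> 'a list \<Rightarrow> bool" where
  "is_path E p \<longleftrightarrow> p \<noteq> [] \<and> distinct p \<and>
     (\<forall>i. Suc i < length p \<longrightarrow> {p ! i, p ! Suc i} \<in> E)"

definition connected_graph :: "'a set \<Rightarrow> 'a set set \<Rightarrow> bool" where
  "connected_graph V E \<longleftrightarrow>
     (\<forall>u\<in>V. \<forall>w\<in>V. \<exists>p. is_path E p \<and> p ! 0 = u \<and> last p = w)"

definition has_cycle :: "'a set set \<Rightarrow> bool" where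
  "has_cycle E \<longleftrightarrow> (\<exists>p. is_path E p \<and> length p \<ge> 3 \<and> {last p, p ! 0} \<in> E)"

definition is_tree :: "'a set \<Rightarrow> 'a set set \<Rightarrow> bool" where
  "is_tree V E \<longleftrightarrow> simple_graph V E \<and> V \<noteq> {} \<and> connected_graph V E \<and> \<not> has_cycle E"

definition is_shelling :: "'a set set \<Rightarrow> 'a set list \<Rightarrow> bool" where
  "is_shelling E \<sigma> \<longleftrightarrow> distinct \<sigma> \<and> set \<sigma> = E \<and>
     (\<forall>k. 1 \<le> k \<and> k \<le> length \<sigma> \<longrightarrow>
        connected_graph (\<Union> (set (take k \<sigma>))) (set (take k \<sigma>)))"

definition num_shellings :: "'a set set \<Rightarrow> nat" where
  "num_shellings E = card {\<sigma>. is_shelling E \<sigma>}"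

text \<open>Shellings of the rooted tree T_v: first edge incident to v.\<close>
definition num_rooted_shellings :: "'a set set \<Rightarrow> 'a \<Rightarrow> nat" where
  "num_rooted_shellings E v = card {\<sigma>. is_shelling E \<sigma> \<and> v \<in> hd \<sigma>}"

text \<open>Descending paths in T_v (as vertex lists, each vertex the parent of the next):
  a path is descending iff its vertices are, in order, at strictly increasing
  distance from the root v.\<close>
definition dist_from :: "'a set set \<Rightarrow> 'a \<Rightarrow> 'a \<Rightarrow> nat" where
  "dist_from E v w = (LEAST n. \<exists>p. is_path E p \<and> p ! 0 = v \<and> last p = w \<and> length p = Suc n)"

definition is_descending_path :: "'a set set \<Rightarrow> 'a \<Rightarrow> 'a list \<Rightarrow> bool" where
  "is_descending_path E v p \<longleftrightarrow> is_path E p \<and>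
     (\<forall>i. Suc i < length p \<longrightarrow> dist_from E v (p ! Suc i) = Suc (dist_from E v (p ! i)))"

definition longest_desc :: "'a set set \<Rightarrow> 'a \<Rightarrow> nat" where
  "longest_desc E v = Max {length p - 1 | p. is_descending_path E v p}"

end

theory Submission
  imports Defs
begin

abbreviation adjs :: "'a set set \<Rightarrow> 'a list \<Rightarrow> bool" where
  "adjs E xs \<equiv> successively (\<lambda>x y. {x,y} \<in> E) xs"

lemma successively_nth: "successively P xs \<longleftrightarrow> (\<forall>i. Suc i < length xs \<longrightarrow> P (xs!i) (xs!Suc i))"
proof (induction P xs rule: successively.induct)
  case (3 P x y xs)
  show ?case
  proof
    assume "successively P (x # y # xs)"
    then show "\<forall>i. Suc i < length (x # y # xs) \<longrightarrow> P ((x # y # xs) ! i) ((x # y # xs) ! Suc i)"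
      using 3 by (auto simp: nth_Cons split: nat.split)
  next
    assume H: "\<forall>i. Suc i < length (x # y # xs) \<longrightarrow> P ((x # y # xs) ! i) ((x # y # xs) ! Suc i)"
    have "P x y" using H[rule_format, of 0] by simp
    moreover have "\<forall>i. Suc i < length (y # xs) \<longrightarrow> P ((y # xs) ! i) ((y # xs) ! Suc i)"
      using H by (metis Suc_less_eq length_Cons nth_Cons_Suc)
    ultimately show "successively P (x # y # xs)" using 3 by simp
  qed
qed auto

lemma is_path_iff: "is_path E p \<longleftrightarrow> p \<noteq> [] \<and> distinct p \<and> adjs E p"
  unfolding is_path_def successively_nth by auto

lemma adjs_append_tl:
  assumes "adjs E xs" "adjs E ys" "xs \<noteq> []" "last xs = hd ys"
  shows "adjs E (xs @ tl ys)"
  using assms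
proof (induction xs)
  case (Cons x xs)
  show ?case
  proof (cases "xs = []")
    case True then show ?thesis using Cons by (cases ys) auto
  next
    case False
    then have "adjs E (xs @ tl ys)" using Cons by (simp add: successively_Cons)
    then show ?thesis using False Cons.prems by (cases xs) (auto simp: successively_Cons)
  qed
qed simp

lemma last_append_tl: "ys \<noteq> [] \<Longrightarrow> xs \<noteq> [] \<Longrightarrow> last xs = hd ys \<Longrightarrow> last (xs @ tl ys) = last ys"
  by (cases ys) auto

lemma walk_to_path:
  assumes "xs \<noteq> []" "adjs E xs"
  shows "\<exists>r. r \<noteq> [] \<and> distinct r \<and> adjs E r \<and> hd r = hd xs \<and> last r = last xs \<and> set r \<subseteq> set xs"
  using assms
proof (induction xs)
  case (Cons x xs)
  show ?case
  proof (cases "xs = []")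
    case True then show ?thesis by (intro exI[of _ "[x]"]) auto
  next
    case False
    then have "adjs E xs" using Cons.prems by (simp add: successively_Cons)
    then obtain r where r: "r \<noteq> []" "distinct r" "adjs E r" "hd r = hd xs" "last r = last xs" "set r \<subseteq> set xs"
      using Cons.IH False by blast
    show ?thesis
    proof (cases "x \<in> set r")
      case True
      define s where "s = dropWhile (\<lambda>y. y \<noteq> x) r"
      have rs: "r = takeWhile (\<lambda>y. y \<noteq> x) r @ s" unfolding s_def by simp
      have sne: "s \<noteq> []" using True unfolding s_def by (simp add: dropWhile_eq_Nil_conv)
      have hs: "hd s = x" using hd_dropWhile[OF sne[unfolded s_def]] unfolding s_def by simp
      have "adjs E s" using r(3) rs successively_append_iff by metis
      moreover have "distinct s" using r(2) rs by (metis distinct_append)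
      moreover have "last s = last r" using rs sne by (metis last_append)
      moreover have "set s \<subseteq> set r" using rs by (metis Un_upper2 set_append)
      ultimately show ?thesis using sne hs r False by (intro exI[of _ s]) auto
    next
      case False
      have "{x, hd xs} \<in> E" using Cons.prems \<open>xs \<noteq> []\<close> by (simp add: successively_Cons)
      then show ?thesis using False r \<open>xs \<noteq> []\<close>
        by (intro exI[of _ "x # r"]) (auto simp: successively_Cons)
    qed
  qed
qed simp


lemma connected_iff_walk:
  "connected_graph V E \<longleftrightarrow> (\<forall>u\<in>V. \<forall>w\<in>V. \<exists>p. p \<noteq> [] \<and> adjs E p \<and> hd p = u \<and> last p = w)"
proof
  assume H: "connected_graph V E"
  show "\<forall>u\<in>V. \<forall>w\<in>V. \<exists>p. p \<noteq> [] \<and> adjs E p \<and> hd p = u \<and> last p = w"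
  proof (intro ballI)
    fix u w assume "u \<in> V" "w \<in> V"
    then obtain p where "is_path E p" "p ! 0 = u" "last p = w" using H unfolding connected_graph_def by blast
    then show "\<exists>p. p \<noteq> [] \<and> adjs E p \<and> hd p = u \<and> last p = w"
      unfolding is_path_iff by (metis hd_conv_nth)
  qed
next
  assume H: "\<forall>u\<in>V. \<forall>w\<in>V. \<exists>p. p \<noteq> [] \<and> adjs E p \<and> hd p = u \<and> last p = w"
  show "connected_graph V E" unfolding connected_graph_def
  proof (intro ballI)
    fix u w assume "u \<in> V" "w \<in> V"
    then obtain p where p: "p \<noteq> []" "adjs E p" "hd p = u" "last p = w" using H by blast
    obtain r where "r \<noteq> []" "distinct r" "adjs E r" "hd r = hd p" "last r = last p"
      using walk_to_path[OF p(1,2)] by blast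
    then show "\<exists>p. is_path E p \<and> p ! 0 = u \<and> last p = w" unfolding is_path_iff using p
      by (metis hd_conv_nth)
  qed
qed

lemma uniq_path:
  assumes acyc: "\<not> has_cycle E"
  shows "distinct p \<Longrightarrow> adjs E p \<Longrightarrow> p \<noteq> [] \<Longrightarrow> distinct q \<Longrightarrow> adjs E q \<Longrightarrow> q \<noteq> []
    \<Longrightarrow> hd p = hd q \<Longrightarrow> last p = last q \<Longrightarrow> p = q"
proof (induction p arbitrary: q)
  case Nil then show ?case by simp
next
  case (Cons a p')
  obtain q' where q: "q = a # q'" using Cons.prems by (cases q) auto
  show ?case
  proof (cases "p' = []")
    case True
    then have "last q = a" using Cons.prems by simp
    then have "q' = []" using Cons.prems(4) q by (metis distinct.simps(2) last.simps last_in_set)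
    then show ?thesis using q True by simp
  next
    case p'ne: False
    show ?thesis
    proof (cases "q' = []")
      case True
      then have "last (a # p') = a" using Cons.prems q by simp
      then have False using Cons.prems(1) p'ne by (metis distinct.simps(2) last.simps last_in_set)
      then show ?thesis ..
    next
      case q'ne: False
      have ap': "adjs E p'" "distinct p'" using Cons.prems p'ne by (auto simp: successively_Cons)
      have aq': "adjs E q'" "distinct q'" using Cons.prems q'ne q by (auto simp: successively_Cons)
      have lst: "last p' = last q'" using Cons.prems q p'ne q'ne by simp
      show ?thesis
      proof (cases "hd p' = hd q'")
        case True
        have "p' = q'" by (rule Cons.IH[OF ap'(2) ap'(1) p'ne aq'(2) aq'(1) q'ne True lst])
        then show ?thesis using q by simp
      next
        case False
        define W where "W = q' @ tl (rev p')"
        have "adjs E (rev p')" using ap'(1) by (simp add: insert_commute)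
        then have aW: "adjs E W" unfolding W_def using aq'(1) q'ne p'ne lst
          by (intro adjs_append_tl) (auto simp: hd_rev)
        have lW: "last W = hd p'" unfolding W_def using q'ne p'ne lst
          by (subst last_append_tl) (auto simp: hd_rev last_rev)
        have hW: "hd W = hd q'" unfolding W_def using q'ne by simp
        have "W \<noteq> []" unfolding W_def using q'ne by simp
        then obtain r where r: "r \<noteq> []" "distinct r" "adjs E r" "hd r = hd q'" "last r = hd p'" "set r \<subseteq> set W"
          using walk_to_path[OF \<open>W \<noteq> []\<close> aW] unfolding lW hW by blast
        have "set W \<subseteq> set q' \<union> set p'" unfolding W_def using list.set_sel(2)[of "rev p'"] p'ne by auto
        then have anr: "a \<notin> set r" using r(6) Cons.prems(1,4) q by auto
        have "length r \<noteq> 1" using r False by (cases r) auto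
        then have "length r \<ge> 2" using r(1) by (cases "length r") auto
        then have len: "length (a # r) \<ge> 3" by simp
        have e1: "{a, hd r} \<in> E" using Cons.prems(5) q q'ne r(4) by (cases q') auto
        have e2: "{last (a#r), (a#r)!0} \<in> E" using Cons.prems(2) p'ne r(5) r(1)
          by (cases p') (auto simp: insert_commute)
        have "is_path E (a # r)" unfolding is_path_iff using anr r e1 by (auto simp: successively_Cons)
        then have "has_cycle E" unfolding has_cycle_def using len e2 by blast
        then show ?thesis using acyc by simp
      qed
    qed
  qed
qed

lemma adjs_mono: "adjs E p \<Longrightarrow> E \<subseteq> F \<Longrightarrow> adjs F p"
  by (erule successively_mono) auto

lemma connected_Un:
  assumes "connected_graph V1 E1" "connected_graph V2 E2" "x \<in> V1" "x \<in> V2"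
  shows "connected_graph (V1 \<union> V2) (E1 \<union> E2)"
proof -
  have c1: "\<exists>p. p \<noteq> [] \<and> adjs (E1 \<union> E2) p \<and> hd p = u \<and> last p = w" if uw: "u \<in> V1" "w \<in> V1" for u w
  proof -
    have H: "\<forall>u\<in>V1. \<forall>w\<in>V1. \<exists>p. p \<noteq> [] \<and> adjs E1 p \<and> hd p = u \<and> last p = w"
      using assms(1) by (simp only: connected_iff_walk)
    obtain p where "p \<noteq> []" "adjs E1 p" "hd p = u" "last p = w" using bspec[OF bspec[OF H uw(1)] uw(2)] by (elim exE conjE)
    moreover have "adjs (E1 \<union> E2) p" using adjs_mono[OF \<open>adjs E1 p\<close> Un_upper1] .
    ultimately show ?thesis by (intro exI[of _ p] conjI)
  qed
  have c2: "\<exists>p. p \<noteq> [] \<and> adjs (E1 \<union> E2) p \<and> hd p = u \<and> last p = w" if uw: "u \<in> V2" "w \<in> V2" for u w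
  proof -
    have H: "\<forall>u\<in>V2. \<forall>w\<in>V2. \<exists>p. p \<noteq> [] \<and> adjs E2 p \<and> hd p = u \<and> last p = w"
      using assms(2) by (simp only: connected_iff_walk)
    obtain p where "p \<noteq> []" "adjs E2 p" "hd p = u" "last p = w" using bspec[OF bspec[OF H uw(1)] uw(2)] by (elim exE conjE)
    moreover have "adjs (E1 \<union> E2) p" using adjs_mono[OF \<open>adjs E2 p\<close> Un_upper2] .
    ultimately show ?thesis by (intro exI[of _ p] conjI)
  qed
  have cat: "\<exists>p. p \<noteq> [] \<and> adjs (E1 \<union> E2) p \<and> hd p = u \<and> last p = w"
    if h12: "\<exists>p. p \<noteq> [] \<and> adjs (E1 \<union> E2) p \<and> hd p = u \<and> last p = x"
       "\<exists>p. p \<noteq> [] \<and> adjs (E1 \<union> E2) p \<and> hd p = x \<and> last p = w" for u w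

  proof -
    obtain p1 where p1: "p1 \<noteq> []" "adjs (E1 \<union> E2) p1" "hd p1 = u" "last p1 = x" using h12(1) by (elim exE conjE)
    obtain p2 where p2: "p2 \<noteq> []" "adjs (E1 \<union> E2) p2" "hd p2 = x" "last p2 = w" using h12(2) by (elim exE conjE)
    have "adjs (E1 \<union> E2) (p1 @ tl p2)" using adjs_append_tl[OF p1(2) p2(2) p1(1)] p1(4) p2(3) by simp
    moreover have "last (p1 @ tl p2) = w" using last_append_tl[of p2 p1] p1 p2 by simp
    moreover have "hd (p1 @ tl p2) = u" using p1 by simp
    moreover have "p1 @ tl p2 \<noteq> []" using p1 by simp
    ultimately show ?thesis by (intro exI[of _ "p1 @ tl p2"] conjI)
  qed
  show ?thesis unfolding connected_iff_walk
  proof (intro ballI)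
    fix u w assume "u \<in> V1 \<union> V2" "w \<in> V1 \<union> V2"
    then have "\<exists>p. p \<noteq> [] \<and> adjs (E1 \<union> E2) p \<and> hd p = u \<and> last p = x"
      "\<exists>p. p \<noteq> [] \<and> adjs (E1 \<union> E2) p \<and> hd p = x \<and> last p = w"
      using c1[of u x] c1[of x w] c2[of u x] c2[of x w] assms(3,4) by auto
    then show "\<exists>p. p \<noteq> [] \<and> adjs (E1 \<union> E2) p \<and> hd p = u \<and> last p = w" by (rule cat)
  qed
qed


lemma adjs_take: "adjs F xs \<Longrightarrow> adjs F (take n xs)"
  by (metis append_take_drop_id successively_append_iff)

lemma adjs_drop: "adjs F xs \<Longrightarrow> adjs F (drop n xs)"
  by (metis append_take_drop_id successively_append_iff)

lemma adjs_rev: "adjs F xs \<Longrightarrow> adjs F (rev xs)"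
  by (simp add: insert_commute)

lemma walk_between:
  assumes "adjs F p" "a < length p" "b < length p"
  shows "\<exists>w. w \<noteq> [] \<and> adjs F w \<and> hd w = p!a \<and> last w = p!b"
proof -
  have *: "\<exists>w. w \<noteq> [] \<and> adjs F w \<and> hd w = p!a \<and> last w = p!b" if "a \<le> b" "b < length p" for a b
  proof -
    define w where "w = drop a (take (Suc b) p)"
    have "w \<noteq> []" using that unfolding w_def by simp
    moreover have "adjs F w" unfolding w_def by (intro adjs_drop adjs_take assms(1))
    moreover have "hd w = p!a" using that unfolding w_def by (simp add: hd_drop_conv_nth)
    moreover have "last w = p!b" using that unfolding w_def by (simp add: last_drop take_Suc_conv_app_nth)
    ultimately show ?thesis by (intro exI[of _ w] conjI)
  qed
  show ?thesis
  proof (cases "a \<le> b")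
    case True then show ?thesis using * assms by blast
  next
    case False
    then obtain w where w: "w \<noteq> []" "adjs F w" "hd w = p!b" "last w = p!a" using *[of b a] assms by auto
    have "rev w \<noteq> []" "adjs F (rev w)" "hd (rev w) = p!a" "last (rev w) = p!b"
      using w adjs_rev[OF w(2)] by (auto simp: hd_rev last_rev)
    then show ?thesis by (intro exI[of _ "rev w"] conjI)
  qed
qed

definition pedges :: "'a list \<Rightarrow> 'a set list" where
  "pedges p = map (\<lambda>i. {p!i, p!Suc i}) [0..<length p - 1]"

lemma length_pedges[simp]: "length (pedges p) = length p - 1"
  by (simp add: pedges_def)

lemma nth_pedges: "i < length p - 1 \<Longrightarrow> pedges p ! i = {p!i, p!Suc i}"
  by (simp add: pedges_def)

lemma pedges_take: "take k (pedges p) = pedges (take (Suc k) p)"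
proof (rule nth_equalityI)
  show "length (take k (pedges p)) = length (pedges (take (Suc k) p))" by (cases "length p") (simp_all add: min_def)
  fix i assume "i < length (take k (pedges p))"
  then have "i < k" "i < length p - 1" by auto
  then show "take k (pedges p) ! i = pedges (take (Suc k) p) ! i"
    by (simp add: nth_pedges)
qed

lemma adjs_pedges: "adjs (set (pedges p)) p"
  unfolding successively_nth
proof (intro allI impI)
  fix i assume "Suc i < length p"
  then have "pedges p ! i = {p!i, p!Suc i}" "i < length (pedges p)" by (auto simp: nth_pedges)
  then show "{p!i, p!Suc i} \<in> set (pedges p)" by (metis nth_mem)
qed

lemma set_pedges_sub: "adjs F p \<Longrightarrow> set (pedges p) \<subseteq> F"
  unfolding successively_nth by (auto simp: in_set_conv_nth nth_pedges)

lemma Union_pedges: "length p \<ge> 2 \<Longrightarrow> \<Union> (set (pedges p)) = set p"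
proof
  show "\<Union> (set (pedges p)) \<subseteq> set p"
  proof
    fix x assume "x \<in> \<Union> (set (pedges p))"
    then obtain i where i: "i < length p - 1" "x \<in> pedges p ! i" by (auto simp: in_set_conv_nth)
    then have "x = p!i \<or> x = p!Suc i" by (simp add: nth_pedges)
    moreover have "p!i \<in> set p" "p!Suc i \<in> set p" using i(1) by (auto intro!: nth_mem)
    ultimately show "x \<in> set p" by blast
  qed
next
  assume "length p \<ge> 2"
  show "set p \<subseteq> \<Union> (set (pedges p))"
  proof
    fix x assume "x \<in> set p"
    then obtain j where j: "j < length p" "p!j = x" by (auto simp: in_set_conv_nth)
    show "x \<in> \<Union> (set (pedges p))"
    proof (cases "j < length p - 1")
      case True
      then have "pedges p ! j \<in> set (pedges p)" by (simp add: nth_mem)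
      then show ?thesis using True j by (auto simp: nth_pedges)
    next
      case False
      then have "j - 1 < length p - 1" "Suc (j - 1) = j" using j \<open>length p \<ge> 2\<close> by auto
      then have "pedges p ! (j-1) \<in> set (pedges p)" "pedges p ! (j-1) = {p!(j-1), p!j}"
        by (metis nth_mem length_pedges, metis nth_pedges)
      then show ?thesis using j by auto
    qed
  qed
qed

lemma connected_pedges:
  assumes "length p \<ge> 2"
  shows "connected_graph (\<Union> (set (pedges p))) (set (pedges p))"
  unfolding connected_iff_walk Union_pedges[OF assms]
proof (intro ballI)
  fix u w assume "u \<in> set p" "w \<in> set p"
  then obtain a b where "a < length p" "b < length p" "p!a = u" "p!b = w" by (auto simp: in_set_conv_nth)
  then show "\<exists>q. q \<noteq> [] \<and> adjs (set (pedges p)) q \<and> hd q = u \<and> last q = w"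
    using walk_between[OF adjs_pedges] by blast
qed


definition idx :: "'b list \<Rightarrow> 'b \<Rightarrow> nat" where
  "idx xs x = (LEAST i. i < length xs \<and> xs!i = x)"

lemma idx_nth: "distinct xs \<Longrightarrow> i < length xs \<Longrightarrow> idx xs (xs!i) = i"
  unfolding idx_def by (rule Least_equality) (auto simp: nth_eq_iff_index_eq)

lemma idx_mem: "x \<in> set xs \<Longrightarrow> idx xs x < length xs \<and> xs ! idx xs x = x"
  unfolding idx_def by (rule LeastI_ex) (auto simp: in_set_conv_nth)

lemma filter_rev_eq:
  assumes ds: "distinct s" and dg: "distinct g" and sub: "set g \<subseteq> set s"
    and ord: "\<forall>i. Suc i < length g \<longrightarrow> idx s (g!Suc i) < idx s (g!i)"
  shows "filter (\<lambda>x. x \<in> set g) s = rev g"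
proof -
  define R where "R = (\<lambda>a b. idx s a < idx s b)"
  have tr: "transp R" unfolding R_def by (auto intro: transpI)
  have "sorted_wrt R (rev g)" unfolding sorted_wrt_iff_nth_Suc_transp[OF tr]
  proof (intro allI impI)
    fix i assume i: "Suc i < length (rev g)"
    define j where "j = length g - 2 - i"
    have "Suc j < length g" "rev g ! i = g ! Suc j" "rev g ! Suc i = g ! j"
      using i unfolding j_def by (auto simp: rev_nth Suc_diff_Suc numeral_2_eq_2)
    then show "R (rev g ! i) (rev g ! Suc i)" using ord unfolding R_def by simp
  qed
  then have s1: "sorted_wrt (<) (map (idx s) (rev g))" unfolding R_def by (simp add: sorted_wrt_map)
  have "sorted_wrt R s" unfolding sorted_wrt_iff_nth_less R_def using ds by (simp add: idx_nth)
  then have "sorted_wrt R (filter (\<lambda>x. x \<in> set g) s)" by (simp add: sorted_wrt_filter)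
  then have s2: "sorted_wrt (<) (map (idx s) (filter (\<lambda>x. x \<in> set g) s))" unfolding R_def by (simp add: sorted_wrt_map)
  have st: "set (map (idx s) (filter (\<lambda>x. x \<in> set g) s)) = set (map (idx s) (rev g))" using sub by auto
  have "map (idx s) (filter (\<lambda>x. x \<in> set g) s) = map (idx s) (rev g)"
    using s1 s2 st unfolding strict_sorted_iff by (metis sorted_distinct_set_unique)
  moreover have "inj_on (idx s) (set (filter (\<lambda>x. x \<in> set g) s) \<union> set (rev g))"
  proof (rule inj_onI)
    fix a b assume "a \<in> set (filter (\<lambda>x. x \<in> set g) s) \<union> set (rev g)" "b \<in> set (filter (\<lambda>x. x \<in> set g) s) \<union> set (rev g)" "idx s a = idx s b"
    then show "a = b" using sub idx_mem[of a s] idx_mem[of b s] by auto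
  qed
  ultimately show ?thesis using inj_on_map_eq_map by blast
qed

lemma merge_eq:
  "length xs = length ys \<Longrightarrow> (\<forall>j<length xs. (xs!j \<in> G) = (ys!j \<in> G)) \<Longrightarrow>
   filter (\<lambda>x. x \<in> G) xs = filter (\<lambda>x. x \<in> G) ys \<Longrightarrow> filter (\<lambda>x. x \<notin> G) xs = filter (\<lambda>x. x \<notin> G) ys \<Longrightarrow> xs = ys"
proof (induction xs arbitrary: ys)
  case Nil then show ?case by simp
next
  case (Cons a xs)
  obtain b ys' where ys: "ys = b # ys'" using Cons.prems(1) by (cases ys) auto
  have ab: "(a \<in> G) = (b \<in> G)" using Cons.prems(2) ys by fastforce
  have pos: "\<forall>j<length xs. (xs!j \<in> G) = (ys'!j \<in> G)" using Cons.prems(2) ys by fastforce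
  show ?case
  proof (cases "a \<in> G")
    case True
    then have "a = b" "filter (\<lambda>x. x \<in> G) xs = filter (\<lambda>x. x \<in> G) ys'" "filter (\<lambda>x. x \<notin> G) xs = filter (\<lambda>x. x \<notin> G) ys'"
      using Cons.prems(3,4) ys ab by auto
    then show ?thesis using Cons.IH[of ys'] Cons.prems(1) ys pos by auto
  next
    case False
    then have "a = b" "filter (\<lambda>x. x \<in> G) xs = filter (\<lambda>x. x \<in> G) ys'" "filter (\<lambda>x. x \<notin> G) xs = filter (\<lambda>x. x \<notin> G) ys'"
      using Cons.prems(3,4) ys ab by auto
    then show ?thesis using Cons.IH[of ys'] Cons.prems(1) ys pos by auto
  qed
qed

lemma take_filter_ex: "\<exists>j. take n (filter P xs) = filter P (take j xs)"
proof (induction xs arbitrary: n)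
  case Nil then show ?case by simp
next
  case (Cons x xs)
  show ?case
  proof (cases "P x")
    case True
    show ?thesis
    proof (cases n)
      case 0 then show ?thesis by (intro exI[of _ 0]) simp
    next
      case (Suc n')
      obtain j where "take n' (filter P xs) = filter P (take j xs)" using Cons.IH by blast
      then show ?thesis using True Suc by (intro exI[of _ "Suc j"]) simp
    qed
  next
    case False
    obtain j where "take n (filter P xs) = filter P (take j xs)" using Cons.IH by blast
    then show ?thesis using False by (intro exI[of _ "Suc j"]) simp
  qed
qed

locale tr =
  fixes V :: "'a set" and E :: "'a set set" and v :: 'a
  assumes tree: "is_tree V E" and card2: "card V \<ge> 2" and vV: "v \<in> V"
begin

lemma finV: "finite V"
  using tree unfolding is_tree_def simple_graph_def by blast

lemma edge: "f \<in> E \<Longrightarrow> \<exists>x y. x \<noteq> y \<and> f = {x,y} \<and> x \<in> V \<and> y \<in> V"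
  using tree unfolding is_tree_def simple_graph_def by blast

lemma E_sub: "E \<subseteq> Pow V"
  using edge by blast

lemma finE: "finite E"
  using E_sub finV by (meson finite_Pow_iff finite_subset)

lemma acyc: "\<not> has_cycle E"
  using tree unfolding is_tree_def by blast

lemma conn: "connected_graph V E"
  using tree unfolding is_tree_def by blast

lemma uniq: "distinct p \<Longrightarrow> adjs E p \<Longrightarrow> p \<noteq> [] \<Longrightarrow> distinct q \<Longrightarrow> adjs E q \<Longrightarrow> q \<noteq> []
    \<Longrightarrow> hd p = hd q \<Longrightarrow> last p = last q \<Longrightarrow> p = q"
  using uniq_path[OF acyc] by blast

lemma path_from: "x \<in> V \<Longrightarrow> y \<in> V \<Longrightarrow> \<exists>q. q \<noteq> [] \<and> distinct q \<and> adjs E q \<and> hd q = x \<and> last q = y"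
  using conn unfolding connected_graph_def is_path_iff by (metis hd_conv_nth)

lemma path_to_edge:
  assumes "f \<in> E"
  shows "\<exists>p. p \<noteq> [] \<and> distinct p \<and> adjs E p \<and> hd p = v \<and> length p \<ge> 2 \<and> {p!(length p - 2), last p} = f"
proof -
  obtain x y where xy: "x \<noteq> y" "f = {x,y}" "x \<in> V" "y \<in> V" using edge[OF assms] by blast
  obtain q where q: "q \<noteq> []" "distinct q" "adjs E q" "hd q = v" "last q = x" using path_from[OF vV xy(3)] by blast
  show ?thesis
  proof (cases "y \<in> set q")
    case False
    define p where "p = q @ [y]"
    have "length q \<ge> 1" using q(1) by (cases q) auto
    then have "p \<noteq> []" "distinct p" "hd p = v" "length p \<ge> 2" using q False unfolding p_def by auto
    moreover have "adjs E p" unfolding p_def using q xy assms by (simp add: successively_append_iff)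
    moreover have "p!(length p - 2) = x" "last p = y" unfolding p_def using q
      by (simp_all add: nth_append last_conv_nth)
    ultimately show ?thesis using xy by (intro exI[of _ p]) auto
  next
    case True
    then obtain i where i: "i < length q" "q!i = y" by (auto simp: in_set_conv_nth)
    define s where "s = drop i q"
    have s: "s \<noteq> []" "distinct s" "adjs E s" "hd s = y" "last s = x"
      using q i unfolding s_def by (auto simp: adjs_drop hd_drop_conv_nth)
    have d: "distinct [y,x]" using xy by simp
    have a: "adjs E [y,x]" using xy assms by (simp add: insert_commute)
    have sy: "s = [y,x]" using uniq[OF s(2,3,1) d a] s(4,5) by simp
    have "q = take i q @ [y,x]" using sy unfolding s_def by (metis append_take_drop_id)
    then obtain t where qq: "q = t @ [y,x]" by blast
    have "length q \<ge> 2" "q!(length q - 2) = y" "last q = x"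
      using qq by (simp_all add: nth_append)
    moreover have "{y, x} = f" using xy by (simp add: insert_commute)
    ultimately show ?thesis using q by (intro exI[of _ q]) simp
  qed
qed

lemma E_ne: "E \<noteq> {}"
proof -
  obtain u where u: "u \<in> V" "u \<noteq> v"
  proof -
    have "card (V - {v}) \<ge> 1" using card2 vV finV by simp
    then have "V - {v} \<noteq> {}" by (metis card.empty not_one_le_zero)
    then show ?thesis using that by blast
  qed
  obtain q where q: "q \<noteq> []" "distinct q" "adjs E q" "hd q = v" "last q = u" using path_from[OF vV u(1)] by blast
  have "length q \<noteq> 1" using q u by (cases q) auto
  then have "Suc 0 < length q" using q(1) by (cases "length q") auto
  then have "{q!0, q!Suc 0} \<in> E" using q(3) unfolding successively_nth by blast
  then show ?thesis by blast
qed

definition P :: "'a set \<Rightarrow> 'a list" where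
  "P f = (SOME p. p \<noteq> [] \<and> distinct p \<and> adjs E p \<and> hd p = v \<and> length p \<ge> 2 \<and> {p!(length p - 2), last p} = f)"

lemma P: "f \<in> E \<Longrightarrow> P f \<noteq> [] \<and> distinct (P f) \<and> adjs E (P f) \<and> hd (P f) = v \<and> length (P f) \<ge> 2
   \<and> {P f!(length (P f) - 2), last (P f)} = f"
  unfolding P_def by (rule someI_ex) (rule path_to_edge)

lemma card_E: "card E \<le> card V - 1"
proof -
  have "inj_on (\<lambda>f. last (P f)) E"
  proof
    fix f g assume fg: "f \<in> E" "g \<in> E" "last (P f) = last (P g)"
    then have "P f = P g" using P[OF fg(1)] P[OF fg(2)] uniq by metis
    then show "f = g" using P[OF fg(1)] P[OF fg(2)] by metis
  qed
  moreover have "(\<lambda>f. last (P f)) ` E \<subseteq> V - {v}"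
  proof
    fix x assume "x \<in> (\<lambda>f. last (P f)) ` E"
    then obtain f where f: "f \<in> E" "x = last (P f)" by blast
    have "x \<in> f" using P[OF f(1)] f(2) by blast
    then have "x \<in> V" using E_sub f(1) by blast
    moreover have "x \<noteq> v"
    proof
      assume "x = v"
      have "hd (P f) = last (P f)" using P[OF f(1)] f(2) \<open>x = v\<close> by simp
      moreover obtain a r where ar: "P f = a # r" "r \<noteq> []" using P[OF f(1)]
        by (cases "P f"; cases "tl (P f)") auto
      ultimately have "a = last r" by simp
      then show False using P[OF f(1)] ar by (metis distinct.simps(2) last_in_set)
    qed
    ultimately show "x \<in> V - {v}" by blast
  qed
  ultimately have "card E \<le> card (V - {v})" using card_inj_on_le finV by (metis finite_Diff)
  then show ?thesis using vV finV by simp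
qed

lemma dist_path:
  assumes p: "p \<noteq> []" "distinct p" "adjs E p" "hd p = v" and i: "i < length p"
  shows "dist_from E v (p!i) = i"
  unfolding dist_from_def
proof (rule Least_equality)
  have "take (Suc i) p = take i p @ [p!i]" using i by (simp add: take_Suc_conv_app_nth)
  then have l: "last (take (Suc i) p) = p!i" by simp
  have "is_path E (take (Suc i) p)" unfolding is_path_iff using p i by (simp add: adjs_take)
  moreover have "take (Suc i) p ! 0 = v" using p by (simp add: hd_conv_nth)
  moreover have "length (take (Suc i) p) = Suc i" using i by simp
  ultimately have "is_path E (take (Suc i) p) \<and> take (Suc i) p ! 0 = v \<and> last (take (Suc i) p) = p!i \<and> length (take (Suc i) p) = Suc i"
    using l by blast
  then show "\<exists>q. is_path E q \<and> q ! 0 = v \<and> last q = p ! i \<and> length q = Suc i" by blast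
next
  fix n assume "\<exists>q. is_path E q \<and> q ! 0 = v \<and> last q = p ! i \<and> length q = Suc n"
  then obtain q where q: "is_path E q" "q ! 0 = v" "last q = p ! i" "length q = Suc n" by blast
  have "take (Suc i) p = take i p @ [p!i]" using i by (simp add: take_Suc_conv_app_nth)
  then have l: "last (take (Suc i) p) = p!i" by simp
  have t: "take (Suc i) p \<noteq> []" "distinct (take (Suc i) p)" "adjs E (take (Suc i) p)" "hd (take (Suc i) p) = v"
    using p i by (simp_all add: adjs_take)
  note t = t l
  have "q = take (Suc i) p" using q t uniq unfolding is_path_iff by (metis hd_conv_nth)
  then show "i \<le> n" using q(4) i by simp
qed

lemma desc_le:
  assumes p: "p \<noteq> []" "distinct p" "adjs E p" "hd p = v"
  shows "length p - 1 \<le> longest_desc E v"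
proof -
  have "is_descending_path E v p" unfolding is_descending_path_def is_path_iff
    using p dist_path[OF p] by auto
  then have mem: "length p - 1 \<in> {length p - 1 | p. is_descending_path E v p}" by blast
  have "{length p - 1 | p. is_descending_path E v p} \<subseteq> {..card V}"
  proof
    fix k assume "k \<in> {length p - 1 | p. is_descending_path E v p}"
    then obtain q where q: "is_descending_path E v q" "k = length q - 1" by blast
    show "k \<in> {..card V}"
    proof (cases "length q \<ge> 2")
      case True
      have "set q = \<Union> (set (pedges q))" using Union_pedges[OF True] by simp
      also have "\<dots> \<subseteq> V" using set_pedges_sub[of E q] q(1) E_sub unfolding is_descending_path_def is_path_iff by blast
      finally have "card (set q) \<le> card V" using finV by (simp add: card_mono)
      then show ?thesis using q distinct_card[of q] unfolding is_descending_path_def is_path_iff by auto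
    next
      case False then show ?thesis using q card2 by auto
    qed
  qed
  then have "finite {length p - 1 | p. is_descending_path E v p}" by (rule finite_subset) simp
  then show ?thesis unfolding longest_desc_def using mem by (rule Max_ge)
qed


definition gs :: "'a set list \<Rightarrow> 'a set list" where
  "gs \<sigma> = pedges (P (hd \<sigma>))"

definition tau :: "'a set list \<Rightarrow> 'a set list" where
  "tau \<sigma> = gs \<sigma> @ filter (\<lambda>x. x \<notin> set (gs \<sigma>)) \<sigma>"

definition posn :: "'a set list \<Rightarrow> nat set" where
  "posn \<sigma> = {j. j < length (tl \<sigma>) \<and> tl \<sigma> ! j \<in> set (gs \<sigma>)}"

context
  fixes \<sigma> assumes sh: "is_shelling E \<sigma>"
begin

lemma sig: "\<sigma> \<noteq> []" "distinct \<sigma>" "set \<sigma> = E" "hd \<sigma> \<in> E" "length \<sigma> = card E"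
proof -
  show "distinct \<sigma>" "set \<sigma> = E" using sh unfolding is_shelling_def by auto
  then show ne: "\<sigma> \<noteq> []" using E_ne by auto
  show "hd \<sigma> \<in> E" using ne \<open>set \<sigma> = E\<close> by auto
  show "length \<sigma> = card E" using \<open>distinct \<sigma>\<close> \<open>set \<sigma> = E\<close> distinct_card by metis
qed

lemma pref_conn: "1 \<le> k \<Longrightarrow> k \<le> length \<sigma> \<Longrightarrow> connected_graph (\<Union> (set (take k \<sigma>))) (set (take k \<sigma>))"
  using sh unfolding is_shelling_def by blast

abbreviation "p \<equiv> P (hd \<sigma>)"

lemma pp: "p \<noteq> []" "distinct p" "adjs E p" "hd p = v" "length p \<ge> 2" "{p!(length p - 2), last p} = hd \<sigma>"
  using P[OF sig(4)] by auto

lemma len_gs: "length (gs \<sigma>) = length p - 1" "length (gs \<sigma>) \<ge> 1"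
  unfolding gs_def using pp by auto

lemma nth_gs: "i < length (gs \<sigma>) \<Longrightarrow> gs \<sigma> ! i = {p!i, p!Suc i}"
  unfolding gs_def by (simp add: nth_pedges)

lemma last_gs: "last (gs \<sigma>) = hd \<sigma>"
proof -
  have ne: "gs \<sigma> \<noteq> []" using len_gs(2) by auto
  have e1: "length (gs \<sigma>) - 1 = length p - 2" using len_gs(1) by simp
  have "last (gs \<sigma>) = gs \<sigma> ! (length p - 2)" using ne e1 by (simp add: last_conv_nth)
  also have "\<dots> = {p!(length p - 2), p!Suc (length p - 2)}" using len_gs pp by (intro nth_gs) auto
  also have "p!Suc (length p - 2) = last p" using pp by (simp add: last_conv_nth numeral_2_eq_2 Suc_diff_Suc)
  finally show ?thesis using pp by simp
qed

lemma hd_in_gs: "hd \<sigma> \<in> set (gs \<sigma>)"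
  using last_gs len_gs by (metis last_in_set list.size(3) not_one_le_zero)

lemma gs_sub: "set (gs \<sigma>) \<subseteq> E"
  unfolding gs_def using pp by (simp add: set_pedges_sub)

lemma distinct_gs: "distinct (gs \<sigma>)"
  unfolding distinct_conv_nth
proof (intro allI impI)
  fix i j assume ij: "i < length (gs \<sigma>)" "j < length (gs \<sigma>)" "i \<noteq> j"
  show "gs \<sigma> ! i \<noteq> gs \<sigma> ! j"
  proof
    assume eq: "gs \<sigma> ! i = gs \<sigma> ! j"
    have lp: "i < length p" "Suc i < length p" "j < length p" "Suc j < length p" using ij len_gs by auto
    have "{p!i, p!Suc i} = {p!j, p!Suc j}" using eq nth_gs ij by simp
    then have "(p!i = p!j \<and> p!Suc i = p!Suc j) \<or> (p!i = p!Suc j \<and> p!Suc i = p!j)" by (auto simp: doubleton_eq_iff)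
    then have "(i = j) \<or> (i = Suc j \<and> Suc i = j)" using pp(2) lp by (auto simp: nth_eq_iff_index_eq)
    then show False using ij by auto
  qed
qed

lemma order_gs: "\<forall>i. Suc i < length (gs \<sigma>) \<longrightarrow> idx \<sigma> (gs \<sigma> ! Suc i) < idx \<sigma> (gs \<sigma> ! i)"
proof (intro allI impI)
  fix i assume i: "Suc i < length (gs \<sigma>)"
  define k where "k = idx \<sigma> (gs \<sigma> ! i)"
  have gi: "gs \<sigma> ! i \<in> set \<sigma>" using i gs_sub sig(3) by (metis Suc_lessD nth_mem subsetD)
  have k: "k < length \<sigma>" "\<sigma> ! k = gs \<sigma> ! i" unfolding k_def
    using conjunct1[OF idx_mem[OF gi]] conjunct2[OF idx_mem[OF gi]] by - assumption+
  define Q where "Q = set (take (Suc k) \<sigma>)"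
  have cQ: "connected_graph (\<Union> Q) Q" unfolding Q_def using k by (intro pref_conn) auto
  have gQ: "gs \<sigma> ! i \<in> Q" unfolding Q_def using k by (metis in_set_conv_nth length_take lessI min_less_iff_conj nth_take)
  have hQ: "hd \<sigma> \<in> Q" unfolding Q_def using sig(1) by (cases \<sigma>) auto
  have QE: "Q \<subseteq> E" unfolding Q_def using sig(3) by (meson set_take_subset)
  have "p!i \<in> \<Union> Q" using gQ nth_gs[of i] i by auto
  moreover have "last p \<in> \<Union> Q" using hQ pp(6) by blast
  ultimately obtain w where w: "w \<noteq> []" "adjs Q w" "hd w = p!i" "last w = last p"
    using cQ unfolding connected_iff_walk by blast
  obtain r where r: "r \<noteq> []" "distinct r" "adjs Q r" "hd r = p!i" "last r = last p"
    using walk_to_path[OF w(1,2)] w(3,4) by metis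
  have ilen: "i + 2 < length p" using i len_gs by simp
  have d: "drop i p \<noteq> []" "distinct (drop i p)" "adjs E (drop i p)" "hd (drop i p) = p!i" "last (drop i p) = last p"
    using pp ilen by (auto simp: adjs_drop hd_drop_conv_nth)
  have "r = drop i p" using uniq[OF r(2) adjs_mono[OF r(3) QE] r(1) d(2,3,1)] r(4,5) d(4,5) by simp
  then have "adjs Q (drop i p)" using r(3) by simp
  moreover have "Suc 1 < length (drop i p)" using ilen by simp
  ultimately have "{drop i p ! 1, drop i p ! Suc 1} \<in> Q" unfolding successively_nth by blast
  moreover have "drop i p ! 1 = p ! Suc i" "drop i p ! Suc 1 = p ! Suc (Suc i)" using ilen by auto
  ultimately have "gs \<sigma> ! Suc i \<in> Q" using nth_gs[OF i] by simp
  then obtain j where j: "j < Suc k" "\<sigma> ! j = gs \<sigma> ! Suc i" unfolding Q_def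
    by (auto simp: in_set_conv_nth)
  have "idx \<sigma> (gs \<sigma> ! Suc i) = j" using j idx_nth[OF sig(2)] k(1) by (metis less_Suc_eq_le order_le_less_trans le_less_trans less_imp_le_nat)
  moreover have "j \<noteq> k"
  proof
    assume "j = k"
    then have "gs \<sigma> ! Suc i = gs \<sigma> ! i" using j k by simp
    then show False using distinct_gs i by (simp add: nth_eq_iff_index_eq)
  qed
  ultimately show "idx \<sigma> (gs \<sigma> ! Suc i) < idx \<sigma> (gs \<sigma> ! i)" using j(1) unfolding k_def by simp
qed

lemma filter_G: "filter (\<lambda>x. x \<in> set (gs \<sigma>)) \<sigma> = rev (gs \<sigma>)"
  using filter_rev_eq[OF sig(2) distinct_gs _ order_gs] gs_sub sig(3) by simp

lemma c_le: "length (gs \<sigma>) \<le> longest_desc E v"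
  using desc_le[OF pp(1-4)] len_gs by simp

lemma G_conn: "connected_graph (\<Union> (set (gs \<sigma>))) (set (gs \<sigma>))"
  unfolding gs_def using pp(5) by (rule connected_pedges)

lemma tau_shelling: "is_shelling E (tau \<sigma>)"
  unfolding is_shelling_def
proof (intro conjI allI impI)
  show "distinct (tau \<sigma>)" unfolding tau_def using distinct_gs sig(2) by auto
  show "set (tau \<sigma>) = E" unfolding tau_def using gs_sub sig(3) by auto
  fix k assume k: "1 \<le> k \<and> k \<le> length (tau \<sigma>)"
  show "connected_graph (\<Union> (set (take k (tau \<sigma>)))) (set (take k (tau \<sigma>)))"
  proof (cases "k \<le> length (gs \<sigma>)")
    case True
    then have "take k (tau \<sigma>) = take k (gs \<sigma>)" unfolding tau_def by simp
    also have "\<dots> = pedges (take (Suc k) p)" unfolding gs_def by (rule pedges_take)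
    finally have eq: "take k (tau \<sigma>) = pedges (take (Suc k) p)" .
    have "length (take (Suc k) p) \<ge> 2" using True k len_gs pp(5) by simp
    then show ?thesis unfolding eq by (rule connected_pedges)
  next
    case False
    define F where "F = filter (\<lambda>x. x \<notin> set (gs \<sigma>)) \<sigma>"
    have "take k (tau \<sigma>) = gs \<sigma> @ take (k - length (gs \<sigma>)) F" unfolding tau_def F_def using False by simp
    moreover obtain j where j: "take (k - length (gs \<sigma>)) F = filter (\<lambda>x. x \<notin> set (gs \<sigma>)) (take j \<sigma>)"
      unfolding F_def using take_filter_ex by blast
    ultimately have "set (take k (tau \<sigma>)) = set (gs \<sigma>) \<union> set (take j \<sigma>)" by auto
    moreover have "connected_graph (\<Union> (set (gs \<sigma>) \<union> set (take j \<sigma>))) (set (gs \<sigma>) \<union> set (take j \<sigma>))"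
    proof (cases "j = 0")
      case True then show ?thesis using G_conn by simp
    next
      case False
      define j' where "j' = min j (length \<sigma>)"
      have tj: "take j \<sigma> = take j' \<sigma>" unfolding j'_def by (simp add: min_def)
      have "length \<sigma> \<ge> 1" using sig(1) by (cases \<sigma>) auto
      then have "1 \<le> j'" "j' \<le> length \<sigma>" unfolding j'_def using False by (auto simp: min_def)
      then have c2: "connected_graph (\<Union> (set (take j' \<sigma>))) (set (take j' \<sigma>))" by (rule pref_conn)
      have "hd \<sigma> \<in> set (take j' \<sigma>)" using \<open>1 \<le> j'\<close> sig(1) by (cases \<sigma>; cases j') auto
      then have "last p \<in> \<Union> (set (take j' \<sigma>))" "last p \<in> \<Union> (set (gs \<sigma>))" using pp(6) hd_in_gs by blast+
      then show ?thesis using connected_Un[OF G_conn c2] tj by simp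
    qed
    ultimately show ?thesis by simp
  qed
qed

lemma tau_root: "v \<in> hd (tau \<sigma>)"
proof -
  have "gs \<sigma> \<noteq> []" using len_gs by auto
  then have "hd (tau \<sigma>) = gs \<sigma> ! 0" unfolding tau_def by (simp add: hd_conv_nth nth_append)
  also have "\<dots> = {p!0, p!Suc 0}" using len_gs by (intro nth_gs) auto
  finally show ?thesis using pp by (simp add: hd_conv_nth)
qed

lemma filter_tl: "filter (\<lambda>x. x \<in> set (gs \<sigma>)) (tl \<sigma>) = tl (rev (gs \<sigma>))"
proof -
  have "\<sigma> = hd \<sigma> # tl \<sigma>" using sig(1) by simp
  then have "rev (gs \<sigma>) = hd \<sigma> # filter (\<lambda>x. x \<in> set (gs \<sigma>)) (tl \<sigma>)"
    using filter_G hd_in_gs by (metis filter.simps(2))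
  then show ?thesis by (metis list.sel(3))
qed

lemma filter_tl': "filter (\<lambda>x. x \<notin> set (gs \<sigma>)) (tl \<sigma>) = filter (\<lambda>x. x \<notin> set (gs \<sigma>)) \<sigma>"
proof -
  have "\<sigma> = hd \<sigma> # tl \<sigma>" using sig(1) by simp
  then show ?thesis using hd_in_gs by (metis filter.simps(2))
qed

lemma posn: "posn \<sigma> \<subseteq> {0..<card E - 1}" "card (posn \<sigma>) = length (gs \<sigma>) - 1"
proof -
  show "posn \<sigma> \<subseteq> {0..<card E - 1}" unfolding posn_def using sig(5) by auto
  have "card (posn \<sigma>) = length (filter (\<lambda>x. x \<in> set (gs \<sigma>)) (tl \<sigma>))"
    unfolding posn_def by (simp add: length_filter_conv_card)
  also have "\<dots> = length (gs \<sigma>) - 1" using filter_tl by simp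
  finally show "card (posn \<sigma>) = length (gs \<sigma>) - 1" .
qed


end


lemma code_inj:
  assumes s1: "is_shelling E s1" and s2: "is_shelling E s2"
    and eq: "(tau s1, length (gs s1), posn s1) = (tau s2, length (gs s2), posn s2)"
  shows "s1 = s2"
proof -
  have t: "tau s1 = tau s2" and c: "length (gs s1) = length (gs s2)" and ps: "posn s1 = posn s2" using eq by auto
  have "gs s1 = take (length (gs s1)) (tau s1)" unfolding tau_def by simp
  also have "\<dots> = take (length (gs s2)) (tau s2)" using t c by simp
  also have "\<dots> = gs s2" unfolding tau_def by simp
  finally have g: "gs s1 = gs s2" .
  define G where "G = set (gs s1)"
  have G2: "G = set (gs s2)" unfolding G_def g ..
  have "filter (\<lambda>x. x \<notin> G) s1 = drop (length (gs s1)) (tau s1)" unfolding tau_def G_def by simp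
  also have "\<dots> = drop (length (gs s2)) (tau s2)" using t c by simp
  also have "\<dots> = filter (\<lambda>x. x \<notin> G) s2" unfolding tau_def G2 by simp
  finally have fn: "filter (\<lambda>x. x \<notin> G) s1 = filter (\<lambda>x. x \<notin> G) s2" .
  have hd: "hd s1 = hd s2" using last_gs[OF s1] last_gs[OF s2] g by simp
  have f1: "filter (\<lambda>x. x \<in> G) (tl s1) = filter (\<lambda>x. x \<in> G) (tl s2)"
    using filter_tl[OF s1] filter_tl[OF s2] g unfolding G_def by simp
  have "filter (\<lambda>x. x \<notin> G) (tl s1) = filter (\<lambda>x. x \<notin> G) s1" using filter_tl'[OF s1] unfolding G_def .
  moreover have "filter (\<lambda>x. x \<notin> G) (tl s2) = filter (\<lambda>x. x \<notin> G) s2" using filter_tl'[OF s2] unfolding G2 .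
  ultimately have f2: "filter (\<lambda>x. x \<notin> G) (tl s1) = filter (\<lambda>x. x \<notin> G) (tl s2)" using fn by simp
  have len: "length (tl s1) = length (tl s2)" using sig(5)[OF s1] sig(5)[OF s2] by simp
  have pos: "\<forall>j<length (tl s1). (tl s1 ! j \<in> G) = (tl s2 ! j \<in> G)"
  proof (intro allI impI)
    fix j assume j: "j < length (tl s1)"
    have "(j \<in> posn s1) = (j \<in> posn s2)" using ps by simp
    then show "(tl s1 ! j \<in> G) = (tl s2 ! j \<in> G)" using j len unfolding posn_def G_def g by simp
  qed
  have "tl s1 = tl s2" using merge_eq[OF len pos f1 f2] .
  then show ?thesis using hd sig(1)[OF s1] sig(1)[OF s2] by (metis list.collapse)
qed

lemma sum_shift: fixes f :: "nat \<Rightarrow> nat" shows "(\<Sum>c\<in>{1..L}. f (c - 1)) = (\<Sum>k<L. (f k :: nat))"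
  using sum.atLeast1_atMost_eq[of "\<lambda>c. f (c - 1)" L] by simp

theorem main_bound:
  "card {\<sigma>. is_shelling E \<sigma>} \<le> (\<Sum>k<longest_desc E v. (card V - 2) choose k) * card {\<tau>. is_shelling E \<tau> \<and> v \<in> hd \<tau>}"
proof -
  define S where "S = {\<sigma>. is_shelling E \<sigma>}"
  define R where "R = {\<tau>. is_shelling E \<tau> \<and> v \<in> hd \<tau>}"
  define L where "L = longest_desc E v"
  define N where "N = card E - 1"
  define code where "code = (\<lambda>\<sigma>. (tau \<sigma>, length (gs \<sigma>), posn \<sigma>))"
  define B where "B = (\<lambda>c::nat. {A. A \<subseteq> {0..<N} \<and> card A = c - 1})"
  define U where "U = (\<Union>c\<in>{1..L}. R \<times> {c} \<times> B c)"
  have inj: "inj_on code S" unfolding code_def S_def by (rule inj_onI) (auto intro: code_inj)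
  have sub: "code ` S \<subseteq> U"
  proof
    fix x assume "x \<in> code ` S"
    then obtain \<sigma> where s: "is_shelling E \<sigma>" "x = code \<sigma>" unfolding S_def by blast
    have "length (gs \<sigma>) \<in> {1..L}" using len_gs[OF s(1)] c_le[OF s(1)] unfolding L_def by simp
    moreover have "tau \<sigma> \<in> R" unfolding R_def using tau_shelling[OF s(1)] tau_root[OF s(1)] by simp
    moreover have "posn \<sigma> \<in> B (length (gs \<sigma>))" unfolding B_def N_def using posn[OF s(1)] by simp
    ultimately show "x \<in> U" unfolding U_def s(2) code_def by blast
  qed
  have finR: "finite R"
  proof (rule finite_subset)
    show "R \<subseteq> {xs. set xs \<subseteq> E \<and> length xs \<le> card E}"
      unfolding R_def is_shelling_def using distinct_card by fastforce
    show "finite {xs. set xs \<subseteq> E \<and> length xs \<le> card E}" using finE by (rule finite_lists_length_le)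
  qed
  have finB: "finite (B c)" for c unfolding B_def by (rule finite_subset[of _ "Pow {0..<N}"]) auto
  have cardB: "card (B c) = N choose (c - 1)" for c unfolding B_def using n_subsets[of "{0..<N}" "c - 1"] by simp
  have finU: "finite U" unfolding U_def using finR finB by auto
  have "card S = card (code ` S)" using inj by (simp add: card_image)
  also have "\<dots> \<le> card U" using sub finU by (rule card_mono[rotated])
  also have "\<dots> \<le> (\<Sum>c\<in>{1..L}. card (R \<times> {c} \<times> B c))" unfolding U_def by (rule card_UN_le) simp
  also have "\<dots> = (\<Sum>c\<in>{1..L}. card R * (N choose (c - 1)))" by (simp add: card_cartesian_product cardB)
  also have "\<dots> \<le> (\<Sum>c\<in>{1..L}. card R * ((card V - 2) choose (c - 1)))"
  proof (rule sum_mono)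
    fix c
    have "N \<le> card V - 2" unfolding N_def using card_E by simp
    then show "card R * (N choose (c - 1)) \<le> card R * ((card V - 2) choose (c - 1))"
      by (simp add: binomial_right_mono)
  qed
  also have "\<dots> = (\<Sum>k<L. card R * ((card V - 2) choose k))" by (rule sum_shift)
  also have "\<dots> = card R * (\<Sum>k<L. (card V - 2) choose k)" by (simp add: sum_distrib_left)
  also have "\<dots> = (\<Sum>k<L. (card V - 2) choose k) * card R" by (simp add: mult.commute)
  finally show ?thesis unfolding S_def R_def L_def .
qed

end


lemma sum_choose_le: "(\<Sum>k<L. N choose k) \<le> (2::nat) ^ N"
proof -
  define M where "M = max N L"
  have "(\<Sum>k<L. N choose k) \<le> (\<Sum>k\<le>M. N choose k)"
    by (rule sum_mono2) (auto simp: M_def)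
  also have "(\<Sum>k\<le>M. N choose k) = (\<Sum>k\<le>N. N choose k)"
    by (rule sum.mono_neutral_left[symmetric]) (auto simp: M_def)
  also have "\<dots> = 2 ^ N" by (rule choose_row_sum)
  finally show ?thesis .
qed

theorem lemma3p11:
  fixes V :: "'a set" and E :: "'a set set" and v :: 'a
  assumes "is_tree V E" and "card V \<ge> 2" and "v \<in> V"
  shows "num_shellings E \<le>
           (\<Sum>k<longest_desc E v. (card V - 2) choose k) * num_rooted_shellings E v
         \<and> num_shellings E \<le> 2 ^ (card V - 2) * num_rooted_shellings E v"
proof -
  interpret tr V E v using assms by unfold_locales
  have 1: "num_shellings E \<le> (\<Sum>k<longest_desc E v. (card V - 2) choose k) * num_rooted_shellings E v"
    unfolding num_shellings_def num_rooted_shellings_def by (rule main_bound)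
  also have "\<dots> \<le> 2 ^ (card V - 2) * num_rooted_shellings E v"
    by (rule mult_right_mono) (rule sum_choose_le, simp)
  finally show ?thesis using 1 by simp
qed

end
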